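(* Let $X$ be a $T_1$ space, $\mathcal C$ a pre-pseudogroup on $X$, and $f\in\mathcal C(U,V)$. Then the underlying map $\bar f:U\to V$ is continuous; moreover it is a local homeomorphism.
   Context: $X_{top}$ denotes the set of open subsets of $X$, regarded as a category with exactly one morphism $U\to V$ iff $U\subseteq V$. Let $\mathcal C$ be a small category with $\mathrm{Ob}(\mathcal C)=X_{top}$ containing $X_{top}$ as a subcategory (identity on objects). For each open $V$, $\mathcal C(-,V)$ is a presheaf of sets on $X$ (restriction along $U'\subseteq U$ = precomposition with the inclusion morphism). For $x\in X$ let $\mathcal C_x(V)=\operatorname{colim}_{U\ni x}\mathcal C(U,V)$ (germ of $f\in\mathcal C(U,V)$ at $x$ written $f_x$); postcomposition with inclusions makes this functorial in $V$, and for $y\in X$ let $\mathcal C_x^y=\lim_{V\ni y}\mathcal C_x(V)$ (limit over open neighbourhoods of $y$), with projections $\mathcal C_x^y\to\mathcal C_x(V)$. Composition in $\mathcal C$ induces $\mathcal C_y^z\times\mathcal C_x^y\to\mathcal C_x^z$: given $\varphi\in\mathcal C_x^y,\psi\in\mathcal C_y^z$ and open $W\ni z$, choose $g\in\mathcal C(V,W)$, $y\in V$, representing the component $\psi_W$, and $f\in\mathcal C(U,V)$ representing $\varphi_V$; the $W$-component of $\psi\circ\varphi$ is $(g\circ f)_x$. This defines a category $\mathcal C^\star$ with objects the points of $X$ and $\mathcal C^\star(x,y)=\mathcal C_x^y$. For $X$ a $T_1$ space, a pre-pseudogroup on $X$ is such a $\mathcal C$ satisfying: (1) $\mathrm{Ob}(\mathcal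 C)=\mathrm{Ob}(X_{top})$; (2) for every open $V$ and $x\in X$, the map $\coprod_{y\in V}\mathcal C_x^y\to\mathcal C_x(V)$ induced by the projections is a bijection; (3) $\mathcal C^\star$ is a groupoid. Underlying map: for $f\in\mathcal C(U,V)$ and $x\in U$, by (2) there is a unique $y\in V$ such that the germ $f_x\in\mathcal C_x(V)$ lies in the image of $\mathcal C_x^y$; set $\bar f(x)=y$. This gives a map $\bar f:U\to V$. *)

theory Defs
  imports "HOL-Analysis.Analysis"
begin

text \<open>A small category whose objects are the open subsets of the space (the type 'a,
  carrying a topology via the type class), given by hom-sets Hom U V, a composition
  cmp g f (meaning g after f), identities ident U, and the morphisms incl U V
  (for U a subset of V) forming the subcategory X_top (identity on objects).\<close>

definition cat_on_opens ::
  "('a::topological_space set \<Rightarrow> 'a set \<Rightarrow> 'm set) \<Rightarrow> ('m \<Rightarrow> 'm \<Rightarrow> 'm)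
   \<Rightarrow> ('a set \<Rightarrow> 'm) \<Rightarrow> ('a set \<Rightarrow> 'a set \<Rightarrow> 'm) \<Rightarrow> bool" where
  "cat_on_opens Hom cmp ident incl \<longleftrightarrow>
     (\<forall>U V W f g. open U \<and> open V \<and> open W \<and> f \<in> Hom U V \<and> g \<in> Hom V W
        \<longrightarrow> cmp g f \<in> Hom U W)
   \<and> (\<forall>U V W Z f g h. open U \<and> open V \<and> open W \<and> open Z \<and> f \<in> Hom U V \<and> g \<in> Hom V W
        \<and> h \<in> Hom W Z \<longrightarrow> cmp h (cmp g f) = cmp (cmp h g) f)
   \<and> (\<forall>U. open U \<longrightarrow> ident U \<in> Hom U U)
   \<and> (\<forall>U V f. open U \<and> open V \<and> f \<in> Hom U V \<longrightarrow> cmp f (ident U) = f \<and> cmp (ident V) f = f)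
   \<and> (\<forall>U V. open U \<and> open V \<and> U \<subseteq> V \<longrightarrow> incl U V \<in> Hom U V)
   \<and> (\<forall>U. open U \<longrightarrow> incl U U = ident U)
   \<and> (\<forall>U V W. open U \<and> open V \<and> open W \<and> U \<subseteq> V \<and> V \<subseteq> W
        \<longrightarrow> cmp (incl V W) (incl U V) = incl U W)"

text \<open>The germ at x of f \<in> C(U,V): its equivalence class in colim_{U \<ni> x} C(U,V),
  represented as the set of all equivalent pairs (U',f').\<close>

definition germ ::
  "('a::topological_space set \<Rightarrow> 'a set \<Rightarrow> 'm set) \<Rightarrow> ('m \<Rightarrow> 'm \<Rightarrow> 'm)
   \<Rightarrow> ('a set \<Rightarrow> 'a set \<Rightarrow> 'm) \<Rightarrow> 'a \<Rightarrow> 'a set \<Rightarrow> 'a set \<Rightarrow> 'm \<Rightarrow> ('a set \<times> 'm) set" where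
  "germ Hom cmp incl x V U f =
     {(U', f'). open U' \<and> x \<in> U' \<and> f' \<in> Hom U' V \<and>
        (\<exists>W. open W \<and> x \<in> W \<and> W \<subseteq> U \<and> W \<subseteq> U' \<and>
             cmp f (incl W U) = cmp f' (incl W U'))}"

definition germs ::
  "('a::topological_space set \<Rightarrow> 'a set \<Rightarrow> 'm set) \<Rightarrow> ('m \<Rightarrow> 'm \<Rightarrow> 'm)
   \<Rightarrow> ('a set \<Rightarrow> 'a set \<Rightarrow> 'm) \<Rightarrow> 'a \<Rightarrow> 'a set \<Rightarrow> ('a set \<times> 'm) set set" where
  "germs Hom cmp incl x V =
     {germ Hom cmp incl x V U f | U f. open U \<and> x \<in> U \<and> f \<in> Hom U V}"

text \<open>C_x^y = lim_{V \<ni> y} C_x(V): compatible families indexed by the open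
  neighbourhoods V of y (extended by {} elsewhere); the transition maps
  C_x(V') \<rightarrow> C_x(V) for V' \<subseteq> V are postcomposition with incl V' V.\<close>

definition Cstar ::
  "('a::topological_space set \<Rightarrow> 'a set \<Rightarrow> 'm set) \<Rightarrow> ('m \<Rightarrow> 'm \<Rightarrow> 'm)
   \<Rightarrow> ('a set \<Rightarrow> 'a set \<Rightarrow> 'm) \<Rightarrow> 'a \<Rightarrow> 'a \<Rightarrow> ('a set \<Rightarrow> ('a set \<times> 'm) set) set" where
  "Cstar Hom cmp incl x y =
     {\<phi>. (\<forall>V. open V \<and> y \<in> V \<longrightarrow> \<phi> V \<in> germs Hom cmp incl x V)
        \<and> (\<forall>V. \<not> (open V \<and> y \<in> V) \<longrightarrow> \<phi> V = {})
        \<and> (\<forall>V V' U f. open V \<and> open V' \<and> y \<in> V' \<and> V' \<subseteq> V \<and> open U \<and> x \<in> U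
              \<and> f \<in> Hom U V' \<and> \<phi> V' = germ Hom cmp incl x V' U f
              \<longrightarrow> \<phi> V = germ Hom cmp incl x V U (cmp (incl V' V) f))}"

definition Cstar_comp ::
  "('a::topological_space set \<Rightarrow> 'a set \<Rightarrow> 'm set) \<Rightarrow> ('m \<Rightarrow> 'm \<Rightarrow> 'm)
   \<Rightarrow> ('a set \<Rightarrow> 'a set \<Rightarrow> 'm) \<Rightarrow> 'a \<Rightarrow> 'a \<Rightarrow> 'a
   \<Rightarrow> ('a set \<Rightarrow> ('a set \<times> 'm) set) \<Rightarrow> ('a set \<Rightarrow> ('a set \<times> 'm) set)
   \<Rightarrow> ('a set \<Rightarrow> ('a set \<times> 'm) set)" where
  "Cstar_comp Hom cmp incl x y z \<psi> \<phi> = (\<lambda>W.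
     if open W \<and> z \<in> W then
       (SOME \<gamma>. \<exists>V g U f. open V \<and> y \<in> V \<and> g \<in> Hom V W \<and> \<psi> W = germ Hom cmp incl y W V g
          \<and> open U \<and> x \<in> U \<and> f \<in> Hom U V \<and> \<phi> V = germ Hom cmp incl x V U f
          \<and> \<gamma> = germ Hom cmp incl x W U (cmp g f))
     else {})"

definition Cstar_id ::
  "('a::topological_space set \<Rightarrow> 'a set \<Rightarrow> 'm set) \<Rightarrow> ('m \<Rightarrow> 'm \<Rightarrow> 'm)
   \<Rightarrow> ('a set \<Rightarrow> 'm) \<Rightarrow> ('a set \<Rightarrow> 'a set \<Rightarrow> 'm) \<Rightarrow> 'a \<Rightarrow> ('a set \<Rightarrow> ('a set \<times> 'm) set)" where
  "Cstar_id Hom cmp ident incl x = (\<lambda>W.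
     if open W \<and> x \<in> W then germ Hom cmp incl x W W (ident W) else {})"

text \<open>Pre-pseudogroup on a T1 space (the type 'a). Condition (1) is built into the
  representation (objects = open sets).\<close>

definition pre_pseudogroup ::
  "('a::t1_space set \<Rightarrow> 'a set \<Rightarrow> 'm set) \<Rightarrow> ('m \<Rightarrow> 'm \<Rightarrow> 'm)
   \<Rightarrow> ('a set \<Rightarrow> 'm) \<Rightarrow> ('a set \<Rightarrow> 'a set \<Rightarrow> 'm) \<Rightarrow> bool" where
  "pre_pseudogroup Hom cmp ident incl \<longleftrightarrow>
     cat_on_opens Hom cmp ident incl
   \<and> (\<forall>V x. open V \<longrightarrow>
        bij_betw (\<lambda>(y, \<phi>). \<phi> V) (SIGMA y:V. Cstar Hom cmp incl x y) (germs Hom cmp incl x V))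
   \<and> (\<forall>x y \<phi>. \<phi> \<in> Cstar Hom cmp incl x y \<longrightarrow>
        (\<exists>\<psi> \<in> Cstar Hom cmp incl y x.
            Cstar_comp Hom cmp incl x y x \<psi> \<phi> = Cstar_id Hom cmp ident incl x
          \<and> Cstar_comp Hom cmp incl y x y \<phi> \<psi> = Cstar_id Hom cmp ident incl y))"

definition underlying ::
  "('a::topological_space set \<Rightarrow> 'a set \<Rightarrow> 'm set) \<Rightarrow> ('m \<Rightarrow> 'm \<Rightarrow> 'm)
   \<Rightarrow> ('a set \<Rightarrow> 'a set \<Rightarrow> 'm) \<Rightarrow> 'a set \<Rightarrow> 'a set \<Rightarrow> 'm \<Rightarrow> 'a \<Rightarrow> 'a" where
  "underlying Hom cmp incl U V f x =
     (THE y. y \<in> V \<and> (\<exists>\<phi> \<in> Cstar Hom cmp incl x y. \<phi> V = germ Hom cmp incl x V U f))"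

definition local_homeomorphism_on :: "'a::topological_space set \<Rightarrow> ('a \<Rightarrow> 'b::topological_space) \<Rightarrow> bool" where
  "local_homeomorphism_on U g \<longleftrightarrow>
     (\<forall>x\<in>U. \<exists>W. open W \<and> x \<in> W \<and> W \<subseteq> U \<and> open (g ` W) \<and>
        (\<exists>h. homeomorphism W (g ` W) g h))"

end

theory Submission imports Defs begin

locale pp =
  fixes Hom :: "'a::t1_space set \<Rightarrow> 'a set \<Rightarrow> 'm set"
    and cmp :: "'m \<Rightarrow> 'm \<Rightarrow> 'm"
    and ident :: "'a set \<Rightarrow> 'm"
    and incl :: "'a set \<Rightarrow> 'a set \<Rightarrow> 'm"
  assumes ppg: "pre_pseudogroup Hom cmp ident incl"
begin

abbreviation "G \<equiv> germ Hom cmp incl"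
abbreviation "CS \<equiv> Cstar Hom cmp incl"
abbreviation "ub \<equiv> underlying Hom cmp incl"

lemma cat: "cat_on_opens Hom cmp ident incl" using ppg unfolding pre_pseudogroup_def by (elim conjE)
lemmas catc = cat[unfolded cat_on_opens_def]
lemmas ppgc = ppg[unfolded pre_pseudogroup_def]

lemma comp_hom: "open U \<Longrightarrow> open V \<Longrightarrow> open W \<Longrightarrow> f \<in> Hom U V \<Longrightarrow> g \<in> Hom V W \<Longrightarrow> cmp g f \<in> Hom U W"
  using catc[THEN conjunct1] by blast
lemma assoc: "open U \<Longrightarrow> open V \<Longrightarrow> open W \<Longrightarrow> open Z \<Longrightarrow> f \<in> Hom U V \<Longrightarrow> g \<in> Hom V W \<Longrightarrow> h \<in> Hom W Z
   \<Longrightarrow> cmp h (cmp g f) = cmp (cmp h g) f"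
  using catc[THEN conjunct2[THEN conjunct1]] by blast
lemma ident_hom: "open U \<Longrightarrow> ident U \<in> Hom U U"
  using catc[THEN conjunct2[THEN conjunct2, THEN conjunct1]] by blast
lemma id_r: "open U \<Longrightarrow> open V \<Longrightarrow> f \<in> Hom U V \<Longrightarrow> cmp f (ident U) = f"
  using catc[THEN conjunct2[THEN conjunct2, THEN conjunct2, THEN conjunct1]] by blast
lemma id_l: "open U \<Longrightarrow> open V \<Longrightarrow> f \<in> Hom U V \<Longrightarrow> cmp (ident V) f = f"
  using catc[THEN conjunct2[THEN conjunct2, THEN conjunct2, THEN conjunct1]] by blast
lemma incl_hom: "open U \<Longrightarrow> open V \<Longrightarrow> U \<subseteq> V \<Longrightarrow> incl U V \<in> Hom U V"
  using catc[THEN conjunct2[THEN conjunct2, THEN conjunct2, THEN conjunct2, THEN conjunct1]] by blast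
lemma incl_id: "open U \<Longrightarrow> incl U U = ident U"
  using catc[THEN conjunct2[THEN conjunct2, THEN conjunct2, THEN conjunct2, THEN conjunct2, THEN conjunct1]] by blast
lemma incl_comp: "open U \<Longrightarrow> open V \<Longrightarrow> open W \<Longrightarrow> U \<subseteq> V \<Longrightarrow> V \<subseteq> W \<Longrightarrow> cmp (incl V W) (incl U V) = incl U W"
  using catc[THEN conjunct2[THEN conjunct2, THEN conjunct2, THEN conjunct2, THEN conjunct2, THEN conjunct2]] by blast

lemma bij: "open V \<Longrightarrow> bij_betw (\<lambda>(y, \<phi>). \<phi> V) (SIGMA y:V. CS x y) (germs Hom cmp incl x V)"
  using ppgc[THEN conjunct2, THEN conjunct1] by blast

lemma inv: "\<phi> \<in> CS x y \<Longrightarrow> \<exists>\<psi> \<in> CS y x.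
            Cstar_comp Hom cmp incl x y x \<psi> \<phi> = Cstar_id Hom cmp ident incl x
          \<and> Cstar_comp Hom cmp incl y x y \<phi> \<psi> = Cstar_id Hom cmp ident incl y"
  using ppgc[THEN conjunct2, THEN conjunct2] by blast

definition rel where "rel x A a B b \<longleftrightarrow> (\<exists>W. open W \<and> x \<in> W \<and> W \<subseteq> A \<and> W \<subseteq> B \<and> cmp a (incl W A) = cmp b (incl W B))"

lemma G_def': "G x V A a = {(B,b). open B \<and> x \<in> B \<and> b \<in> Hom B V \<and> rel x A a B b}"
  unfolding germ_def rel_def by auto

lemma restr: "open W' \<Longrightarrow> open W \<Longrightarrow> open A \<Longrightarrow> open V \<Longrightarrow> W' \<subseteq> W \<Longrightarrow> W \<subseteq> A \<Longrightarrow> a \<in> Hom A V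
  \<Longrightarrow> cmp a (incl W' A) = cmp (cmp a (incl W A)) (incl W' W)"
proof -
  assume h: "open W'" "open W" "open A" "open V" "W' \<subseteq> W" "W \<subseteq> A" "a \<in> Hom A V"
  have "incl W' A = cmp (incl W A) (incl W' W)" using incl_comp h by simp
  moreover have "cmp a (cmp (incl W A) (incl W' W)) = cmp (cmp a (incl W A)) (incl W' W)"
    using assoc[of W' W A V "incl W' W" "incl W A" a] h incl_hom by simp
  ultimately show ?thesis by simp
qed

lemma rel_refl: "open A \<Longrightarrow> x \<in> A \<Longrightarrow> rel x A a A a"
  unfolding rel_def by blast
lemma rel_sym: "rel x A a B b \<Longrightarrow> rel x B b A a"
  unfolding rel_def by metis
lemma rel_trans: "rel x A a B b \<Longrightarrow> rel x B b C c \<Longrightarrow> open A \<Longrightarrow> open B \<Longrightarrow> open C \<Longrightarrow> open V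
  \<Longrightarrow> a \<in> Hom A V \<Longrightarrow> b \<in> Hom B V \<Longrightarrow> c \<in> Hom C V \<Longrightarrow> rel x A a C c"
proof -
  assume r1: "rel x A a B b" and r2: "rel x B b C c" and o: "open A" "open B" "open C" "open V"
    and h: "a \<in> Hom A V" "b \<in> Hom B V" "c \<in> Hom C V"
  obtain W where W: "open W" "x \<in> W" "W \<subseteq> A" "W \<subseteq> B" "cmp a (incl W A) = cmp b (incl W B)"
    using r1 unfolding rel_def by blast
  obtain W' where W': "open W'" "x \<in> W'" "W' \<subseteq> B" "W' \<subseteq> C" "cmp b (incl W' B) = cmp c (incl W' C)"
    using r2 unfolding rel_def by blast
  let ?N = "W \<inter> W'"
  have "cmp a (incl ?N A) = cmp (cmp a (incl W A)) (incl ?N W)"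
    using restr[of ?N W A V a] W W' o h by auto
  also have "\<dots> = cmp (cmp b (incl W B)) (incl ?N W)" using W by simp
  also have "\<dots> = cmp b (incl ?N B)" using restr[of ?N W B V b] W W' o h by (simp add: open_Int)
  also have "\<dots> = cmp (cmp b (incl W' B)) (incl ?N W')" using restr[of ?N W' B V b] W W' o h by auto
  also have "\<dots> = cmp (cmp c (incl W' C)) (incl ?N W')" using W' by simp
  also have "\<dots> = cmp c (incl ?N C)" using restr[of ?N W' C V c] W W' o h by (simp add: open_Int)
  finally show ?thesis unfolding rel_def using W W' by (intro exI[of _ ?N]) auto
qed

lemma G_eq: assumes "open A" "open B" "open V" "x \<in> A" "x \<in> B" "a \<in> Hom A V" "b \<in> Hom B V"
  shows "G x V A a = G x V B b \<longleftrightarrow> rel x A a B b"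
proof
  assume "G x V A a = G x V B b"
  moreover have "(B,b) \<in> G x V B b" using assms rel_refl unfolding G_def' by auto
  ultimately show "rel x A a B b" unfolding G_def' by auto
next
  assume r: "rel x A a B b"
  show "G x V A a = G x V B b" unfolding G_def'
  proof (intro Collect_cong prod.case_cong refl iffI)
    fix C c assume "open C \<and> x \<in> C \<and> c \<in> Hom C V \<and> rel x A a C c"
    then show "open C \<and> x \<in> C \<and> c \<in> Hom C V \<and> rel x B b C c"
      using rel_trans[OF rel_sym[OF r]] assms by blast
  next
    fix C c assume "open C \<and> x \<in> C \<and> c \<in> Hom C V \<and> rel x B b C c"
    then show "open C \<and> x \<in> C \<and> c \<in> Hom C V \<and> rel x A a C c"
      using rel_trans[OF r] assms by blast
  qed
qed

lemma rel_post: "rel x A a B b \<Longrightarrow> open A \<Longrightarrow> open B \<Longrightarrow> open V \<Longrightarrow> open V' \<Longrightarrow> a \<in> Hom A V \<Longrightarrow> b \<in> Hom B V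
  \<Longrightarrow> h \<in> Hom V V' \<Longrightarrow> rel x A (cmp h a) B (cmp h b)"
proof -
  assume r: "rel x A a B b" and h: "open A" "open B" "open V" "open V'" "a \<in> Hom A V" "b \<in> Hom B V" "h \<in> Hom V V'"
  obtain W where W: "open W" "x \<in> W" "W \<subseteq> A" "W \<subseteq> B" "cmp a (incl W A) = cmp b (incl W B)"
    using r unfolding rel_def by blast
  have "cmp (cmp h a) (incl W A) = cmp h (cmp a (incl W A))"
    using assoc[of W A V V' "incl W A" a h] h W incl_hom by simp
  also have "\<dots> = cmp h (cmp b (incl W B))" using W by simp
  also have "\<dots> = cmp (cmp h b) (incl W B)"
    using assoc[of W B V V' "incl W B" b h] h W incl_hom by simp
  finally show ?thesis using W unfolding rel_def by blast
qed

lemma G_post: assumes "G x V A a = G x V B b" "open A" "open B" "open V" "open V'" "x \<in> A" "x \<in> B"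
   "a \<in> Hom A V" "b \<in> Hom B V" "h \<in> Hom V V'"
 shows "G x V' A (cmp h a) = G x V' B (cmp h b)"
proof -
  have "rel x A a B b" using assms G_eq by blast
  then have "rel x A (cmp h a) B (cmp h b)" using rel_post assms by blast
  moreover have "cmp h a \<in> Hom A V'" "cmp h b \<in> Hom B V'" using comp_hom assms by blast+
  ultimately show ?thesis using G_eq assms by blast
qed

lemma rel_at: "open W \<Longrightarrow> x \<in> W \<Longrightarrow> W \<subseteq> A \<Longrightarrow> W \<subseteq> B \<Longrightarrow> cmp a (incl W A) = cmp b (incl W B) \<Longrightarrow> rel x A a B b"
  unfolding rel_def by blast

lemma G_restr: assumes "open W" "open A" "open V" "x \<in> W" "W \<subseteq> A" "a \<in> Hom A V"
  shows "G x V A a = G x V W (cmp a (incl W A))"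
proof -
  have "cmp (cmp a (incl W A)) (incl W W) = cmp a (incl W A)"
  proof -
    have "cmp a (incl W A) \<in> Hom W V" using assms comp_hom incl_hom by blast
    then show ?thesis using assms incl_id id_r by simp
  qed
  then have "rel x A a W (cmp a (incl W A))" using assms by (intro rel_at[of W]) auto
  moreover have "cmp a (incl W A) \<in> Hom W V" using assms comp_hom incl_hom by blast
  ultimately show ?thesis using assms G_eq by blast
qed

lemma CS_conj: "\<phi> \<in> CS x y \<Longrightarrow> (\<forall>V. open V \<and> y \<in> V \<longrightarrow> \<phi> V \<in> germs Hom cmp incl x V)
        \<and> (\<forall>V. \<not> (open V \<and> y \<in> V) \<longrightarrow> \<phi> V = {})
        \<and> (\<forall>V V' U f. open V \<and> open V' \<and> y \<in> V' \<and> V' \<subseteq> V \<and> open U \<and> x \<in> U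
              \<and> f \<in> Hom U V' \<and> \<phi> V' = G x V' U f
              \<longrightarrow> \<phi> V = G x V U (cmp (incl V' V) f))"
  unfolding Cstar_def mem_Collect_eq .

lemma CS_D1: "\<phi> \<in> CS x y \<Longrightarrow> open V \<Longrightarrow> y \<in> V \<Longrightarrow> \<exists>A a. open A \<and> x \<in> A \<and> a \<in> Hom A V \<and> \<phi> V = G x V A a"
proof -
  assume h: "\<phi> \<in> CS x y" "open V" "y \<in> V"
  have "\<phi> V \<in> germs Hom cmp incl x V" using CS_conj[OF h(1), THEN conjunct1] h by blast
  then show ?thesis unfolding germs_def mem_Collect_eq by blast
qed
lemma CS_D2: "\<phi> \<in> CS x y \<Longrightarrow> \<not> (open V \<and> y \<in> V) \<Longrightarrow> \<phi> V = {}"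
  using CS_conj[THEN conjunct2, THEN conjunct1] by blast
lemma CS_D3: "\<phi> \<in> CS x y \<Longrightarrow> open V \<Longrightarrow> open V' \<Longrightarrow> y \<in> V' \<Longrightarrow> V' \<subseteq> V \<Longrightarrow> open U \<Longrightarrow> x \<in> U
   \<Longrightarrow> f \<in> Hom U V' \<Longrightarrow> \<phi> V' = G x V' U f \<Longrightarrow> \<phi> V = G x V U (cmp (incl V' V) f)"
proof -
  assume h: "\<phi> \<in> CS x y" and r: "open V" "open V'" "y \<in> V'" "V' \<subseteq> V" "open U" "x \<in> U"
   "f \<in> Hom U V'" "\<phi> V' = G x V' U f"
  note c = CS_conj[OF h, THEN conjunct2, THEN conjunct2]
  show ?thesis using r by (intro c[rule_format] conjI) simp_all
qed

lemma CS_I: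
  assumes a1: "\<And>V. open V \<Longrightarrow> y \<in> V \<Longrightarrow> \<phi> V \<in> germs Hom cmp incl x V"
  and a2: "\<And>V. \<not> (open V \<and> y \<in> V) \<Longrightarrow> \<phi> V = {}"
  and a3: "\<And>V V' U f. open V \<Longrightarrow> open V' \<Longrightarrow> y \<in> V' \<Longrightarrow> V' \<subseteq> V \<Longrightarrow> open U \<Longrightarrow> x \<in> U
              \<Longrightarrow> f \<in> Hom U V' \<Longrightarrow> \<phi> V' = G x V' U f
              \<Longrightarrow> \<phi> V = G x V U (cmp (incl V' V) f)"
  shows "\<phi> \<in> CS x y"
  unfolding Cstar_def mem_Collect_eq
proof (intro conjI allI impI)
  fix V assume "open V \<and> y \<in> V" then show "\<phi> V \<in> germs Hom cmp incl x V" using a1 by simp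
next
  fix V assume "\<not> (open V \<and> y \<in> V)" then show "\<phi> V = {}" using a2 by simp
next
  fix V V' U f assume h: "open V \<and> open V' \<and> y \<in> V' \<and> V' \<subseteq> V \<and> open U \<and> x \<in> U
              \<and> f \<in> Hom U V' \<and> \<phi> V' = G x V' U f"
  show "\<phi> V = G x V U (cmp (incl V' V) f)"
    apply (rule a3) using h by simp_all
qed

lemma G_self: "open A \<Longrightarrow> x \<in> A \<Longrightarrow> a \<in> Hom A V \<Longrightarrow> (A,a) \<in> G x V A a"
  unfolding G_def' using rel_refl by blast

lemma CS_dom: assumes "\<phi> \<in> CS x y" "\<phi> V = G x V A a" "open A" "x \<in> A" "a \<in> Hom A V"
  shows "open V \<and> y \<in> V"
  using CS_D2[OF assms(1)] G_self[OF assms(3-5)] assms(2) by auto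

lemma CS_uniq: assumes "open V" "\<phi>1 \<in> CS x y1" "\<phi>2 \<in> CS x y2" "y1 \<in> V" "y2 \<in> V" "\<phi>1 V = \<phi>2 V"
  shows "y1 = y2"
proof -
  have "inj_on (\<lambda>(y, \<phi>). \<phi> V) (SIGMA y:V. CS x y)" using bij_betw_imp_inj_on[OF bij[OF assms(1)]] .
  then have "(y1,\<phi>1) = (y2,\<phi>2)" using assms by (auto dest: inj_onD[of _ _ "(y1,\<phi>1)" "(y2,\<phi>2)"])
  then show ?thesis by simp
qed

lemma ub_eq: assumes "open V" "open A" "x \<in> A" "a \<in> Hom A V" "\<phi> \<in> CS x y" "\<phi> V = G x V A a"
  shows "ub A V a x = y"
proof -
  have y: "y \<in> V" using CS_dom assms by blast
  show ?thesis unfolding underlying_def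
  proof (rule the_equality)
    show "y \<in> V \<and> (\<exists>\<phi>\<in>CS x y. \<phi> V = G x V A a)" using y assms by blast
  next
    fix y' assume "y' \<in> V \<and> (\<exists>\<phi>\<in>CS x y'. \<phi> V = G x V A a)"
    then obtain \<phi>' where "y' \<in> V" "\<phi>' \<in> CS x y'" "\<phi>' V = G x V A a" by blast
    then show "y' = y" using CS_uniq[of V \<phi>' x y' \<phi> y] assms y by auto
  qed
qed

lemma ub_ex: assumes "open V" "open A" "x \<in> A" "a \<in> Hom A V"
  shows "ub A V a x \<in> V \<and> (\<exists>\<phi>\<in>CS x (ub A V a x). \<phi> V = G x V A a)"
proof -
  have "G x V A a \<in> germs Hom cmp incl x V" unfolding germs_def using assms by blast
  then have "G x V A a \<in> (\<lambda>(y, \<phi>). \<phi> V) ` (SIGMA y:V. CS x y)"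
    using bij_betw_imp_surj_on[OF bij[OF assms(1)]] by simp
  then obtain y \<phi> where "y \<in> V" "\<phi> \<in> CS x y" "\<phi> V = G x V A a" by auto
  moreover then have "ub A V a x = y" using ub_eq assms by blast
  ultimately show ?thesis by blast
qed

lemma ub_germ: "G x V A a = G x V B b \<Longrightarrow> ub A V a x = ub B V b x"
proof -
  assume e: "G x V A a = G x V B b"
  show ?thesis unfolding underlying_def e by (rule refl)
qed

lemma ub_rel: "open A \<Longrightarrow> open B \<Longrightarrow> open V \<Longrightarrow> x \<in> A \<Longrightarrow> x \<in> B \<Longrightarrow> a \<in> Hom A V \<Longrightarrow> b \<in> Hom B V
  \<Longrightarrow> rel x A a B b \<Longrightarrow> ub A V a x = ub B V b x"
  by (rule ub_germ, subst G_eq) simp_all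

lemma rel_nbhd: "rel x A a B b \<Longrightarrow> \<exists>W. open W \<and> x \<in> W \<and> W \<subseteq> A \<and> W \<subseteq> B \<and> (\<forall>x'\<in>W. rel x' A a B b)"
proof -
  assume "rel x A a B b"
  then obtain W where W: "open W" "x \<in> W" "W \<subseteq> A" "W \<subseteq> B" "cmp a (incl W A) = cmp b (incl W B)"
    unfolding rel_def by blast
  have "\<forall>x'\<in>W. rel x' A a B b" using W rel_at[of W _ A B a b] by simp
  then show ?thesis using W by (intro exI[of _ W]) simp
qed

lemma ub_ext: assumes "open V" "open V'" "V \<subseteq> V'" "open A" "x \<in> A" "a \<in> Hom A V"
  shows "ub A V' (cmp (incl V V') a) x = ub A V a x"
proof -
  note e = ub_ex[OF assms(1,4,5,6)]
  have y: "ub A V a x \<in> V" using e by (rule conjunct1)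
  obtain \<phi> where \<phi>: "\<phi> \<in> CS x (ub A V a x)" "\<phi> V = G x V A a"
    using e[THEN conjunct2] by (elim bexE)
  have "\<phi> V' = G x V' A (cmp (incl V V') a)" using CS_D3[OF \<phi>(1) assms(2,1) y assms(3,4,5,6) \<phi>(2)] .
  moreover have "cmp (incl V V') a \<in> Hom A V'" using comp_hom incl_hom assms by blast
  ultimately show ?thesis using ub_eq[OF assms(2,4,5) _ \<phi>(1)] by simp
qed

lemma CSid: "Cstar_id Hom cmp ident incl x \<in> CS x x"
proof -
  let ?e = "Cstar_id Hom cmp ident incl x"
  have 1: "\<forall>V. open V \<and> x \<in> V \<longrightarrow> ?e V \<in> germs Hom cmp incl x V"
    unfolding Cstar_id_def germs_def using ident_hom by auto
  have 2: "\<forall>V. \<not> (open V \<and> x \<in> V) \<longrightarrow> ?e V = {}" unfolding Cstar_id_def by auto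
  have 3: "?e W = G x W U (cmp (incl V' W) h)"
    if h: "open W" "open V'" "x \<in> V'" "V' \<subseteq> W" "open U" "x \<in> U" "h \<in> Hom U V'" "?e V' = G x V' U h"
    for W V' U h
  proof -
    have e: "G x V' V' (ident V') = G x V' U h" using h unfolding Cstar_id_def by simp
    have "G x W V' (cmp (incl V' W) (ident V')) = G x W U (cmp (incl V' W) h)"
      by (rule G_post[OF e h(2) h(5) h(2) h(1) h(3) h(6) ident_hom[OF h(2)] h(7) incl_hom[OF h(2) h(1) h(4)]])
    moreover have "cmp (incl V' W) (ident V') = incl V' W" using id_r[OF h(2) h(1) incl_hom[OF h(2) h(1) h(4)]] .
    moreover have "G x W V' (incl V' W) = G x W W (ident W)"
    proof -
      have "cmp (incl V' W) (incl V' V') = cmp (ident W) (incl V' W)"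
        using h incl_id[of V'] id_r[of V' W "incl V' W"] id_l[of V' W "incl V' W"] incl_hom by simp
      then have "rel x V' (incl V' W) W (ident W)" by (rule rel_at[OF h(2) h(3) subset_refl h(4)])
      then show ?thesis using G_eq[OF h(2) h(1) h(1) h(3) _ incl_hom[OF h(2) h(1) h(4)] ident_hom[OF h(1)]] h by (simp add: subsetD)
    qed
    ultimately show ?thesis using h unfolding Cstar_id_def by (simp add: subsetD)
  qed
  show ?thesis using 1 2 3 by (intro CS_I) auto
qed

lemma ub_ident: "open A \<Longrightarrow> x \<in> A \<Longrightarrow> ub A A (ident A) x = x"
  using ub_eq[OF _ _ _ ident_hom CSid] unfolding Cstar_id_def by simp

definition rep where "rep \<psi> \<phi> x y W V g U1 f1 \<longleftrightarrow> open V \<and> y \<in> V \<and> g \<in> Hom V W \<and> \<psi> W = G y W V g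
   \<and> open U1 \<and> x \<in> U1 \<and> f1 \<in> Hom U1 V \<and> \<phi> V = G x V U1 f1"

lemma rep_ex: assumes "\<phi> \<in> CS x y" "\<psi> \<in> CS y z" "open W" "z \<in> W"
  shows "\<exists>V g U1 f1. rep \<psi> \<phi> x y W V g U1 f1"
proof -
  obtain V g where Vg: "open V" "y \<in> V" "g \<in> Hom V W" "\<psi> W = G y W V g"
    using CS_D1[OF assms(2,3,4)] by (elim exE conjE)
  obtain U1 f1 where Uf: "open U1" "x \<in> U1" "f1 \<in> Hom U1 V" "\<phi> V = G x V U1 f1"
    using CS_D1[OF assms(1) Vg(1,2)] by (elim exE conjE)
  show ?thesis unfolding rep_def using Vg Uf by (intro exI conjI)
qed

lemma WD: assumes phi: "\<phi> \<in> CS x y" and psi: "\<psi> \<in> CS y z" and W: "open W"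
  and r1: "rep \<psi> \<phi> x y W V g U1 f1" and r2: "rep \<psi> \<phi> x y W V' g' U1' f1'"
  shows "G x W U1 (cmp g f1) = G x W U1' (cmp g' f1')"
proof -
  from r1 have a: "open V" "y \<in> V" "g \<in> Hom V W" "\<psi> W = G y W V g"
    "open U1" "x \<in> U1" "f1 \<in> Hom U1 V" "\<phi> V = G x V U1 f1" unfolding rep_def by simp_all
  from r2 have b: "open V'" "y \<in> V'" "g' \<in> Hom V' W" "\<psi> W = G y W V' g'"
    "open U1'" "x \<in> U1'" "f1' \<in> Hom U1' V'" "\<phi> V' = G x V' U1' f1'" unfolding rep_def by simp_all
  have "G y W V g = G y W V' g'" using a(4) b(4) by simp
  then have "rel y V g V' g'" using G_eq[OF a(1) b(1) W a(2) b(2) a(3) b(3)] by simp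
  then obtain N where N: "open N" "y \<in> N" "N \<subseteq> V" "N \<subseteq> V'" "cmp g (incl N V) = cmp g' (incl N V')"
    unfolding rel_def by (elim exE conjE)
  obtain U2 f2 where Uf: "open U2" "x \<in> U2" "f2 \<in> Hom U2 N" "\<phi> N = G x N U2 f2"
    using CS_D1[OF phi N(1,2)] by (elim exE conjE)
  have "\<phi> V = G x V U2 (cmp (incl N V) f2)" by (rule CS_D3[OF phi a(1) N(1,2,3) Uf])
  then have e1: "G x V U1 f1 = G x V U2 (cmp (incl N V) f2)" using a(8) by simp
  have "\<phi> V' = G x V' U2 (cmp (incl N V') f2)" by (rule CS_D3[OF phi b(1) N(1,2,4) Uf])
  then have e2: "G x V' U1' f1' = G x V' U2 (cmp (incl N V') f2)" using b(8) by simp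
  have h1: "cmp (incl N V) f2 \<in> Hom U2 V" using comp_hom[OF Uf(1) N(1) a(1) Uf(3) incl_hom[OF N(1) a(1) N(3)]] .
  have h2: "cmp (incl N V') f2 \<in> Hom U2 V'" using comp_hom[OF Uf(1) N(1) b(1) Uf(3) incl_hom[OF N(1) b(1) N(4)]] .
  have g1: "G x W U1 (cmp g f1) = G x W U2 (cmp g (cmp (incl N V) f2))"
    by (rule G_post[OF e1 a(5) Uf(1) a(1) W a(6) Uf(2) a(7) h1 a(3)])
  have g2: "G x W U1' (cmp g' f1') = G x W U2 (cmp g' (cmp (incl N V') f2))"
    by (rule G_post[OF e2 b(5) Uf(1) b(1) W b(6) Uf(2) b(7) h2 b(3)])
  have "cmp g (cmp (incl N V) f2) = cmp (cmp g (incl N V)) f2"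
    by (rule assoc[OF Uf(1) N(1) a(1) W Uf(3) incl_hom[OF N(1) a(1) N(3)] a(3)])
  also have "\<dots> = cmp (cmp g' (incl N V')) f2" using N(5) by simp
  also have "\<dots> = cmp g' (cmp (incl N V') f2)"
    by (rule assoc[OF Uf(1) N(1) b(1) W Uf(3) incl_hom[OF N(1) b(1) N(4)] b(3), symmetric])
  finally show ?thesis using g1 g2 by simp
qed

abbreviation "CC \<equiv> Cstar_comp Hom cmp incl"

lemma comp_val: assumes phi: "\<phi> \<in> CS x y" and psi: "\<psi> \<in> CS y z" and W: "open W" "z \<in> W"
  and r: "rep \<psi> \<phi> x y W V g U1 f1"
  shows "CC x y z \<psi> \<phi> W = G x W U1 (cmp g f1)"
proof -
  let ?P = "\<lambda>\<gamma>. \<exists>V g U f. open V \<and> y \<in> V \<and> g \<in> Hom V W \<and> \<psi> W = G y W V g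
          \<and> open U \<and> x \<in> U \<and> f \<in> Hom U V \<and> \<phi> V = G x V U f
          \<and> \<gamma> = G x W U (cmp g f)"
  have P: "?P \<gamma> \<longleftrightarrow> (\<exists>V g U f. rep \<psi> \<phi> x y W V g U f \<and> \<gamma> = G x W U (cmp g f))" for \<gamma>
    unfolding rep_def by (simp only: conj_assoc)
  have "?P (G x W U1 (cmp g f1))" unfolding P
    by (intro exI[of _ V] exI[of _ g] exI[of _ U1] exI[of _ f1] conjI r refl)
  then have "?P (SOME \<gamma>. ?P \<gamma>)" by (rule someI[of "?P"])
  then obtain V' g' U1' f1' where r': "rep \<psi> \<phi> x y W V' g' U1' f1'"
    and e: "(SOME \<gamma>. ?P \<gamma>) = G x W U1' (cmp g' f1')" unfolding P by (elim exE conjE)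
  have "CC x y z \<psi> \<phi> W = (SOME \<gamma>. ?P \<gamma>)" unfolding Cstar_comp_def using W by simp
  also have "\<dots> = G x W U1' (cmp g' f1')" by (rule e)
  also have "\<dots> = G x W U1 (cmp g f1)" by (rule WD[OF phi psi W(1) r' r])
  finally show ?thesis .
qed

lemma rep_D: "rep \<psi> \<phi> x y W V g U1 f1 \<Longrightarrow> open V \<and> y \<in> V \<and> g \<in> Hom V W \<and> \<psi> W = G y W V g
   \<and> open U1 \<and> x \<in> U1 \<and> f1 \<in> Hom U1 V \<and> \<phi> V = G x V U1 f1"
  unfolding rep_def .

lemma comp_CS: assumes phi: "\<phi> \<in> CS x y" and psi: "\<psi> \<in> CS y z"
  shows "CC x y z \<psi> \<phi> \<in> CS x z"
proof (rule CS_I)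
  fix W assume W: "open W" "z \<in> W"
  obtain V g U1 f1 where r: "rep \<psi> \<phi> x y W V g U1 f1" using rep_ex[OF phi psi W] by (elim exE)
  note rr = rep_D[OF r]
  have v: "open V" "y \<in> V" "g \<in> Hom V W" "open U1" "x \<in> U1" "f1 \<in> Hom U1 V" using rr by simp_all
  have "CC x y z \<psi> \<phi> W = G x W U1 (cmp g f1)" by (rule comp_val[OF phi psi W r])
  moreover have "cmp g f1 \<in> Hom U1 W" by (rule comp_hom[OF v(4) v(1) W(1) v(6) v(3)])
  ultimately show "CC x y z \<psi> \<phi> W \<in> germs Hom cmp incl x W" unfolding germs_def mem_Collect_eq
    using rr by (intro exI[of _ U1] exI[of _ "cmp g f1"] conjI) simp_all
next
  fix W assume nW: "\<not> (open W \<and> z \<in> W)"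
  show "CC x y z \<psi> \<phi> W = {}" unfolding Cstar_comp_def by (rule if_not_P[OF nW])
next
  fix W V0 U h assume h: "open W" "open V0" "z \<in> V0" "V0 \<subseteq> W" "open U" "x \<in> U" "h \<in> Hom U V0"
    "CC x y z \<psi> \<phi> V0 = G x V0 U h"
  obtain V g U1 f1 where r: "rep \<psi> \<phi> x y V0 V g U1 f1" using rep_ex[OF phi psi h(2,3)] by (elim exE)
  note rr = rep_D[OF r]
  have v: "open V" "y \<in> V" "g \<in> Hom V V0" "\<psi> V0 = G y V0 V g" "open U1" "x \<in> U1" "f1 \<in> Hom U1 V"
     "\<phi> V = G x V U1 f1" using rr by simp_all
  have "CC x y z \<psi> \<phi> V0 = G x V0 U1 (cmp g f1)" by (rule comp_val[OF phi psi h(2,3) r])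
  then have e: "G x V0 U1 (cmp g f1) = G x V0 U h" using h(8) by simp
  have i: "incl V0 W \<in> Hom V0 W" by (rule incl_hom[OF h(2,1,4)])
  have "\<psi> W = G y W V (cmp (incl V0 W) g)" by (rule CS_D3[OF psi h(1,2,3,4) v(1,2,3,4)])
  moreover have "cmp (incl V0 W) g \<in> Hom V W" by (rule comp_hom[OF v(1) h(2) h(1) v(3) i])
  ultimately have r2: "rep \<psi> \<phi> x y W V (cmp (incl V0 W) g) U1 f1" unfolding rep_def using v by simp
  have zW: "z \<in> W" using h(3,4) by blast
  have "CC x y z \<psi> \<phi> W = G x W U1 (cmp (cmp (incl V0 W) g) f1)" by (rule comp_val[OF phi psi h(1) zW r2])
  also have "cmp (cmp (incl V0 W) g) f1 = cmp (incl V0 W) (cmp g f1)"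
    by (rule assoc[OF v(5) v(1) h(2) h(1) v(7) v(3) i, symmetric])
  also have "G x W U1 (cmp (incl V0 W) (cmp g f1)) = G x W U (cmp (incl V0 W) h)"
    by (rule G_post[OF e v(5) h(5) h(2) h(1) v(6) h(6) comp_hom[OF v(5) v(1) h(2) v(7) v(3)] h(7) i])
  finally show "CC x y z \<psi> \<phi> W = G x W U (cmp (incl V0 W) h)" .
qed

lemma ub_comp: assumes o: "open A" "open B" "open C" and x: "x \<in> A" and a: "a \<in> Hom A B" and b: "b \<in> Hom B C"
  shows "ub A C (cmp b a) x = ub B C b (ub A B a x)"
proof -
  define y where "y = ub A B a x"
  note e1 = ub_ex[OF o(2) o(1) x a]
  have y: "y \<in> B" using e1 unfolding y_def by (rule conjunct1)
  obtain \<phi> where \<phi>: "\<phi> \<in> CS x y" "\<phi> B = G x B A a" using e1[THEN conjunct2] unfolding y_def by (elim bexE)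
  define z where "z = ub B C b y"
  note e2 = ub_ex[OF o(3) o(2) y b]
  have z: "z \<in> C" using e2 unfolding z_def by (rule conjunct1)
  obtain \<psi> where \<psi>: "\<psi> \<in> CS y z" "\<psi> C = G y C B b" using e2[THEN conjunct2] unfolding z_def by (elim bexE)
  have r: "rep \<psi> \<phi> x y C B b A a" unfolding rep_def using o x a b y \<phi> \<psi> by simp
  have "CC x y z \<psi> \<phi> C = G x C A (cmp b a)" by (rule comp_val[OF \<phi>(1) \<psi>(1) o(3) z r])
  then have "ub A C (cmp b a) x = z"
    using ub_eq[OF o(3) o(1) x comp_hom[OF o(1,2,3) a b] comp_CS[OF \<phi>(1) \<psi>(1)]] by simp
  then show ?thesis unfolding z_def y_def .
qed

lemma ub_in: "open A \<Longrightarrow> open B \<Longrightarrow> x \<in> A \<Longrightarrow> a \<in> Hom A B \<Longrightarrow> ub A B a x \<in> B"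
  using ub_ex[of B A x a] by (rule conjunct1)

lemma ub_val: assumes "open A" "open B" "x \<in> A" "a \<in> Hom A B"
  obtains \<phi> where "\<phi> \<in> CS x (ub A B a x)" "\<phi> B = G x B A a"
  using ub_ex[OF assms(2,1,3,4), THEN conjunct2] by (elim bexE)

lemma loc: assumes phi: "\<phi> \<in> CS x y" and o: "open A" "open B" "open A2" "open B2"
  and x: "x \<in> A" "x \<in> A2" and a: "a \<in> Hom A B" "a2 \<in> Hom A2 B2"
  and e: "\<phi> B = G x B A a" "\<phi> B2 = G x B2 A2 a2"
  shows "\<exists>N. open N \<and> x \<in> N \<and> N \<subseteq> A \<and> N \<subseteq> A2 \<and> (\<forall>x'\<in>N. ub A B a x' = ub A2 B2 a2 x')"
proof -
  have yB: "y \<in> B" using CS_dom[OF phi e(1) o(1) x(1) a(1)] by simp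
  have yB2: "y \<in> B2" using CS_dom[OF phi e(2) o(3) x(2) a(2)] by simp
  define B3 where "B3 = B \<inter> B2"
  have B3: "open B3" "y \<in> B3" "B3 \<subseteq> B" "B3 \<subseteq> B2" unfolding B3_def using o yB yB2 by auto
  obtain A3 a3 where a3: "open A3" "x \<in> A3" "a3 \<in> Hom A3 B3" "\<phi> B3 = G x B3 A3 a3"
    using CS_D1[OF phi B3(1,2)] by (elim exE conjE)
  have i1: "cmp (incl B3 B) a3 \<in> Hom A3 B" by (rule comp_hom[OF a3(1) B3(1) o(2) a3(3) incl_hom[OF B3(1) o(2) B3(3)]])
  have i2: "cmp (incl B3 B2) a3 \<in> Hom A3 B2" by (rule comp_hom[OF a3(1) B3(1) o(4) a3(3) incl_hom[OF B3(1) o(4) B3(4)]])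
  have "\<phi> B = G x B A3 (cmp (incl B3 B) a3)" by (rule CS_D3[OF phi o(2) B3(1,2,3) a3])
  then have "G x B A a = G x B A3 (cmp (incl B3 B) a3)" using e(1) by simp
  then have "rel x A a A3 (cmp (incl B3 B) a3)" using G_eq[OF o(1) a3(1) o(2) x(1) a3(2) a(1) i1] by simp
  then obtain N1 where N1: "open N1" "x \<in> N1" "N1 \<subseteq> A" "N1 \<subseteq> A3" "\<forall>x'\<in>N1. rel x' A a A3 (cmp (incl B3 B) a3)"
    by (rule rel_nbhd[THEN exE]) (elim conjE, blast)
  have "\<phi> B2 = G x B2 A3 (cmp (incl B3 B2) a3)" by (rule CS_D3[OF phi o(4) B3(1,2,4) a3])
  then have "G x B2 A2 a2 = G x B2 A3 (cmp (incl B3 B2) a3)" using e(2) by simp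
  then have "rel x A2 a2 A3 (cmp (incl B3 B2) a3)" using G_eq[OF o(3) a3(1) o(4) x(2) a3(2) a(2) i2] by simp
  then obtain N2 where N2: "open N2" "x \<in> N2" "N2 \<subseteq> A2" "N2 \<subseteq> A3" "\<forall>x'\<in>N2. rel x' A2 a2 A3 (cmp (incl B3 B2) a3)"
    by (rule rel_nbhd[THEN exE]) (elim conjE, blast)
  have "ub A B a x' = ub A2 B2 a2 x'" if x': "x' \<in> N1 \<inter> N2" for x'
  proof -
    have x'1: "x' \<in> A" "x' \<in> A3" "x' \<in> A2" using x' N1 N2 by auto
    have "ub A B a x' = ub A3 B (cmp (incl B3 B) a3) x'"
      using ub_rel[OF o(1) a3(1) o(2) x'1(1,2) a(1) i1] N1(5) x' by simp
    also have "\<dots> = ub A3 B3 a3 x'" by (rule ub_ext[OF B3(1) o(2) B3(3) a3(1) x'1(2) a3(3)])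
    also have "\<dots> = ub A3 B2 (cmp (incl B3 B2) a3) x'" by (rule ub_ext[OF B3(1) o(4) B3(4) a3(1) x'1(2) a3(3), symmetric])
    also have "\<dots> = ub A2 B2 a2 x'"
      using ub_rel[OF o(3) a3(1) o(4) x'1(3,2) a(2) i2] N2(5) x' by simp
    finally show ?thesis .
  qed
  then show ?thesis using N1 N2 by (intro exI[of _ "N1 \<inter> N2"]) auto
qed

lemma ub_cont: assumes o: "open A" "open B" and a: "a \<in> Hom A B"
  shows "continuous_on A (ub A B a)"
  unfolding continuous_on_topological
proof (intro ballI allI impI)
  fix x Ob assume x: "x \<in> A" and Ob: "open Ob" "ub A B a x \<in> Ob"
  obtain \<phi> where \<phi>: "\<phi> \<in> CS x (ub A B a x)" "\<phi> B = G x B A a" using ub_val[OF o x a] by blast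
  define W where "W = Ob \<inter> B"
  have W: "open W" "ub A B a x \<in> W" "W \<subseteq> B" "W \<subseteq> Ob" unfolding W_def using Ob o ub_in[OF o x a] by auto
  obtain A1 a1 where a1: "open A1" "x \<in> A1" "a1 \<in> Hom A1 W" "\<phi> W = G x W A1 a1"
    using CS_D1[OF \<phi>(1) W(1,2)] by (elim exE conjE)
  obtain N where N: "open N" "x \<in> N" "N \<subseteq> A" "N \<subseteq> A1" "\<forall>x'\<in>N. ub A B a x' = ub A1 W a1 x'"
    using loc[OF \<phi>(1) o(1,2) a1(1) W(1) x a1(2) a a1(3) \<phi>(2) a1(4)] by (elim exE conjE)
  have "ub A B a x' \<in> Ob" if "x' \<in> N" for x'
    using N(5) that ub_in[OF a1(1) W(1) _ a1(3), of x'] N(4) W(4) by auto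
  then show "\<exists>N. open N \<and> x \<in> N \<and> (\<forall>y\<in>A. y \<in> N \<longrightarrow> ub A B a y \<in> Ob)"
    using N(1,2) by blast
qed

lemma invloc: assumes phi: "\<phi> \<in> CS x y" and psi: "\<psi> \<in> CS y x"
  and c: "CC x y x \<psi> \<phi> = Cstar_id Hom cmp ident incl x"
  and o: "open A" "open B" "open A'" "open B'" and x: "x \<in> A" and a: "a \<in> Hom A B"
  and ea: "\<phi> B = G x B A a" and y: "y \<in> B'" and b: "b \<in> Hom B' A'" and eb: "\<psi> A' = G y A' B' b"
  shows "\<exists>N. open N \<and> x \<in> N \<and> N \<subseteq> A \<and> (\<forall>x'\<in>N. ub A B a x' \<in> B' \<and> ub B' A' b (ub A B a x') = x')"
proof -
  have xA': "x \<in> A'" using CS_dom[OF psi eb o(4) y b] by simp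
  obtain V2 g2 U2 f2 where r: "rep \<psi> \<phi> x y A' V2 g2 U2 f2" using rep_ex[OF phi psi o(3) xA'] by (elim exE)
  have v: "open V2" "y \<in> V2" "g2 \<in> Hom V2 A'" "\<psi> A' = G y A' V2 g2" "open U2" "x \<in> U2" "f2 \<in> Hom U2 V2"
     "\<phi> V2 = G x V2 U2 f2" using rep_D[OF r] by simp_all
  have "CC x y x \<psi> \<phi> A' = G x A' U2 (cmp g2 f2)" by (rule comp_val[OF phi psi o(3) xA' r])
  moreover have "Cstar_id Hom cmp ident incl x A' = G x A' A' (ident A')" unfolding Cstar_id_def using o(3) xA' by simp
  ultimately have "G x A' U2 (cmp g2 f2) = G x A' A' (ident A')" using c by simp
  moreover have gf: "cmp g2 f2 \<in> Hom U2 A'" by (rule comp_hom[OF v(5) v(1) o(3) v(7) v(3)])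
  ultimately have "rel x U2 (cmp g2 f2) A' (ident A')"
    using G_eq[OF v(5) o(3) o(3) v(6) xA' gf ident_hom[OF o(3)]] by simp
  then obtain N1 where N1: "open N1" "x \<in> N1" "N1 \<subseteq> U2" "N1 \<subseteq> A'" "\<forall>x'\<in>N1. rel x' U2 (cmp g2 f2) A' (ident A')"
    by (rule rel_nbhd[THEN exE]) (elim conjE, blast)
  have k1: "ub V2 A' g2 (ub U2 V2 f2 x') = x'" if x': "x' \<in> N1" for x'
  proof -
    have x'': "x' \<in> U2" "x' \<in> A'" using x' N1 by auto
    have "ub V2 A' g2 (ub U2 V2 f2 x') = ub U2 A' (cmp g2 f2) x'"
      by (rule ub_comp[OF v(5) v(1) o(3) x''(1) v(7) v(3), symmetric])
    also have "\<dots> = ub A' A' (ident A') x'"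
      using ub_rel[OF v(5) o(3) o(3) x'' gf ident_hom[OF o(3)]] N1(5) x' by simp
    also have "\<dots> = x'" by (rule ub_ident[OF o(3) x''(2)])
    finally show ?thesis .
  qed
  obtain N2 where N2: "open N2" "x \<in> N2" "N2 \<subseteq> A" "N2 \<subseteq> U2" "\<forall>x'\<in>N2. ub A B a x' = ub U2 V2 f2 x'"
    using loc[OF phi o(1,2) v(5) v(1) x v(6) a v(7) ea v(8)] by (elim exE conjE)
  obtain M where M: "open M" "y \<in> M" "M \<subseteq> B'" "M \<subseteq> V2" "\<forall>y'\<in>M. ub B' A' b y' = ub V2 A' g2 y'"
    using loc[OF psi o(4,3) v(1) o(3) y v(2) b v(3) eb v(4)] by (elim exE conjE)
  have yy: "ub A B a x = y" by (rule ub_eq[OF o(2) o(1) x a phi ea])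
  define N where "N = N1 \<inter> N2 \<inter> (ub A B a -` M \<inter> A)"
  have "open (ub A B a -` M \<inter> A)"
    using ub_cont[OF o(1,2) a] continuous_on_open_vimage[OF o(1)] M(1) by blast
  then have "open N" unfolding N_def using N1(1) N2(1) by auto
  moreover have "x \<in> N" unfolding N_def using N1(2) N2(2) x yy M(2) by auto
  moreover have "N \<subseteq> A" unfolding N_def by auto
  moreover have "\<forall>x'\<in>N. ub A B a x' \<in> B' \<and> ub B' A' b (ub A B a x') = x'"
  proof
    fix x' assume x': "x' \<in> N"
    have m: "ub A B a x' \<in> M" using x' unfolding N_def by auto
    have "ub B' A' b (ub A B a x') = ub V2 A' g2 (ub A B a x')" using M(5) m by simp
    also have "\<dots> = ub V2 A' g2 (ub U2 V2 f2 x')" using N2(5) x' unfolding N_def by simp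
    also have "\<dots> = x'" using k1 x' unfolding N_def by simp
    finally show "ub A B a x' \<in> B' \<and> ub B' A' b (ub A B a x') = x'" using m M(3) by auto
  qed
  ultimately show ?thesis by blast
qed

lemma main: assumes oU: "open U" and oV: "open V" and f: "f \<in> Hom U V"
  shows "ub U V f ` U \<subseteq> V \<and> continuous_on U (ub U V f) \<and> local_homeomorphism_on U (ub U V f)"
proof (intro conjI)
  show "ub U V f ` U \<subseteq> V" using ub_in[OF oU oV _ f] by auto
  show contF: "continuous_on U (ub U V f)" by (rule ub_cont[OF oU oV f])
  show "local_homeomorphism_on U (ub U V f)" unfolding local_homeomorphism_on_def
  proof
    fix x assume x: "x \<in> U"
    define F where "F = ub U V f"
    define y where "y = F x"
    obtain \<phi> where \<phi>: "\<phi> \<in> CS x y" "\<phi> V = G x V U f" using ub_val[OF oU oV x f] unfolding y_def F_def by blast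
    obtain \<psi> where \<psi>: "\<psi> \<in> CS y x" "CC x y x \<psi> \<phi> = Cstar_id Hom cmp ident incl x"
      "CC y x y \<phi> \<psi> = Cstar_id Hom cmp ident incl y" using inv[OF \<phi>(1)] by blast
    obtain B' b where b: "open B'" "y \<in> B'" "b \<in> Hom B' U" "\<psi> U = G y U B' b"
      using CS_D1[OF \<psi>(1) oU x] by (elim exE conjE)
    define Gm where "Gm = ub B' U b"
    obtain N where N: "open N" "x \<in> N" "N \<subseteq> U" "\<forall>x'\<in>N. F x' \<in> B' \<and> Gm (F x') = x'"
      using invloc[OF \<phi>(1) \<psi>(1) \<psi>(2) oU oV oU b(1) x f \<phi>(2) b(2) b(3) b(4)] unfolding F_def Gm_def
      by (elim exE conjE)
    obtain M where M: "open M" "y \<in> M" "M \<subseteq> B'" "\<forall>y'\<in>M. Gm y' \<in> U \<and> F (Gm y') = y'"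
      using invloc[OF \<psi>(1) \<phi>(1) \<psi>(3) b(1) oU oV oU b(2) b(3) b(4) x f \<phi>(2)] unfolding F_def Gm_def
      by (elim exE conjE)
    have contF': "continuous_on U F" using contF unfolding F_def .
    have contG: "continuous_on B' Gm" unfolding Gm_def by (rule ub_cont[OF b(1) oU b(3)])
    define W where "W = N \<inter> (F -` M \<inter> U)"
    have oW: "open W" unfolding W_def using continuous_on_open_vimage[OF oU] contF' M(1) N(1) by blast
    have xW: "x \<in> W" unfolding W_def using N(2) M(2) x unfolding y_def by auto
    have WU: "W \<subseteq> U" unfolding W_def by auto
    have FW: "F ` W = M \<inter> (Gm -` W \<inter> B')"
    proof
      show "F ` W \<subseteq> M \<inter> (Gm -` W \<inter> B')"
      proof
        fix z assume "z \<in> F ` W"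
        then obtain x' where x': "x' \<in> W" "z = F x'" by blast
        then have "x' \<in> N" "F x' \<in> M" unfolding W_def by auto
        then show "z \<in> M \<inter> (Gm -` W \<inter> B')" using x' N(4) M(3) by auto
      qed
      show "M \<inter> (Gm -` W \<inter> B') \<subseteq> F ` W"
      proof
        fix z assume z: "z \<in> M \<inter> (Gm -` W \<inter> B')"
        then have "F (Gm z) = z" "Gm z \<in> W" using M(4) by auto
        then show "z \<in> F ` W" by (metis imageI)
      qed
    qed
    have "open (Gm -` W \<inter> B')" using continuous_on_open_vimage[OF b(1)] contG oW by blast
    then have oFW: "open (F ` W)" unfolding FW using M(1) by auto
    have FWB: "F ` W \<subseteq> B'" unfolding FW by auto
    have "homeomorphism W (F ` W) F Gm"
    proof (rule homeomorphismI)
      show "continuous_on W F" by (rule continuous_on_subset[OF contF' WU])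
      show "continuous_on (F ` W) Gm" by (rule continuous_on_subset[OF contG FWB])
      show "F ` W \<subseteq> F ` W" by simp
      show "Gm (F x') = x'" if "x' \<in> W" for x' using that N(4) unfolding W_def by auto
      then show "Gm ` F ` W \<subseteq> W" by auto
      show "F (Gm z) = z" if "z \<in> F ` W" for z using that unfolding FW using M(4) by auto
    qed
    then show "\<exists>W. open W \<and> x \<in> W \<and> W \<subseteq> U \<and> open (ub U V f ` W) \<and> (\<exists>h. homeomorphism W (ub U V f ` W) (ub U V f) h)"
      using oW xW WU oFW unfolding F_def by blast
  qed
qed

end

theorem mainTheorem3:
  fixes Hom :: "'a::t1_space set \<Rightarrow> 'a set \<Rightarrow> 'm set"
    and cmp :: "'m \<Rightarrow> 'm \<Rightarrow> 'm"
    and ident :: "'a set \<Rightarrow> 'm"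
    and incl :: "'a set \<Rightarrow> 'a set \<Rightarrow> 'm"
  assumes "pre_pseudogroup Hom cmp ident incl"
    and "open U" and "open V" and "f \<in> Hom U V"
  shows "underlying Hom cmp incl U V f ` U \<subseteq> V
    \<and> continuous_on U (underlying Hom cmp incl U V f)
    \<and> local_homeomorphism_on U (underlying Hom cmp incl U V f)"
  using pp.main[OF pp.intro[OF assms(1)] assms(2,3,4)] .

end
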